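(* Consider the 2-node network dynamical system \[ \dot x_1 = a_1x_1 + w_{12}(x_2-x_1) - w x_2^3 + w(x_1+x_2)^3,\qquad \dot x_2 = a_2x_2 + w_{21}(x_1-x_2) + w x_2^3, \] with $(x_1,x_2)\in\mathbb{R}^2$ and real parameters $a_1,a_2,w_{12},w_{21},w$, where $a_1\neq 0$, $a_2\neq0$, and the parameters satisfy \[ a_1-w_{12}+a_2-w_{21}=0,\qquad a_1a_2-a_1w_{21}-a_2w_{12}=0, \] so that the origin is a nilpotent equilibrium. If $w=0$, then the origin is unstable. On the other hand, if $a_1=-a_2=\alpha$ with $\alpha>0$ and $w<0$, then the origin is locally asymptotically stable.
   Context: An equilibrium $x^*$ of $\dot x=f(x)$ is called nilpotent if all eigenvalues of the Jacobian $\mathrm{D}_xf(x^* )$ are zero. The two displayed algebraic conditions are exactly the conditions that the linearization matrix at the origin has zero trace and zero determinant. *)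

theory Defs
  imports "HOL-Analysis.Analysis"
begin

text \<open>Autonomous ODE x' = f x on the plane, states as pairs (x1, x2) with the
  Euclidean norm.\<close>

definition is_solution :: "(real \<times> real \<Rightarrow> real \<times> real) \<Rightarrow> (real \<Rightarrow> real \<times> real) \<Rightarrow> real set \<Rightarrow> bool" where
  "is_solution f x I \<longleftrightarrow> (\<forall>t\<in>I. (x has_vector_derivative f (x t)) (at t within I))"

definition lyap_stable_origin :: "(real \<times> real \<Rightarrow> real \<times> real) \<Rightarrow> bool" where
  "lyap_stable_origin f \<longleftrightarrow>
     (\<forall>\<epsilon>>0. \<exists>\<delta>>0. \<forall>x T. 0 < T \<and> is_solution f x {0..<T} \<and> norm (x 0) < \<delta>
        \<longrightarrow> (\<forall>t\<in>{0..<T}. norm (x t) < \<epsilon>))"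

definition unstable_origin :: "(real \<times> real \<Rightarrow> real \<times> real) \<Rightarrow> bool" where
  "unstable_origin f \<longleftrightarrow> \<not> lyap_stable_origin f"

definition loc_asymp_stable_origin :: "(real \<times> real \<Rightarrow> real \<times> real) \<Rightarrow> bool" where
  "loc_asymp_stable_origin f \<longleftrightarrow> lyap_stable_origin f \<and>
     (\<exists>\<eta>>0. \<forall>x. is_solution f x {0..} \<and> norm (x 0) < \<eta> \<longrightarrow> (x \<longlongrightarrow> 0) at_top)"

definition net_field :: "real \<Rightarrow> real \<Rightarrow> real \<Rightarrow> real \<Rightarrow> real \<Rightarrow> real \<times> real \<Rightarrow> real \<times> real" where
  "net_field a1 a2 w12 w21 w = (\<lambda>(x1, x2).
     (a1 * x1 + w12 * (x2 - x1) - w * x2 ^ 3 + w * (x1 + x2) ^ 3,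
      a2 * x2 + w21 * (x1 - x2) + w * x2 ^ 3))"

end

theory Submission
  imports Defs
begin


lemma comp_deriv:
  assumes "(x has_vector_derivative v) (at t within I)"
  shows "((\<lambda>t. fst (x t)) has_real_derivative fst v) (at t within I)"
    and "((\<lambda>t. snd (x t)) has_real_derivative snd v) (at t within I)"
proof -
  have d: "(x has_derivative (\<lambda>h. h *\<^sub>R v)) (at t within I)"
    using assms by (simp add: has_vector_derivative_def)
  show "((\<lambda>t. fst (x t)) has_real_derivative fst v) (at t within I)"
    using has_derivative_fst[OF d] by (simp add: has_field_derivative_def mult_commute_abs)
  show "((\<lambda>t. snd (x t)) has_real_derivative snd v) (at t within I)"
    using has_derivative_snd[OF d] by (simp add: has_field_derivative_def mult_commute_abs)
qed

lemma invariance: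
  fixes f f' :: "real \<Rightarrow> real"
  assumes "t1 \<le> t2"
    and der: "\<And>s. s \<in> {t1..t2} \<Longrightarrow> (f has_real_derivative f' s) (at s within {t1..t2})"
    and neg: "\<And>s. s \<in> {t1..t2} \<Longrightarrow> f s > M \<Longrightarrow> f' s \<le> 0"
    and start: "f t1 \<le> M"
  shows "f t2 \<le> M"
proof (rule ccontr)
  assume "\<not> f t2 \<le> M"
  hence ft2: "f t2 > M" by simp
  have cont: "continuous_on {t1..t2} f"
    using der by (meson DERIV_continuous continuous_on_eq_continuous_within)
  define S where "S = {s \<in> {t1..t2}. f s \<le> (\<lambda>_. M) s}"
  have cS: "closed S" unfolding S_def
    by (rule continuous_on_closed_Collect_le[OF cont continuous_on_const closed_atLeastAtMost])
  have neS: "S \<noteq> {}" using start assms(1) by (auto simp: S_def)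
  have bS: "bdd_above S" by (auto simp: S_def bdd_above_def)
  define s0 where "s0 = Sup S"
  have s0S: "s0 \<in> S" unfolding s0_def using closed_contains_Sup[OF neS bS cS] .
  have above: "\<And>s. s \<in> {t1..t2} \<Longrightarrow> s > s0 \<Longrightarrow> f s > M"
  proof -
    fix s assume "s \<in> {t1..t2}" "s > s0"
    show "f s > M"
    proof (rule ccontr)
      assume "\<not> f s > M"
      hence "s \<in> S" using \<open>s \<in> {t1..t2}\<close> by (auto simp: S_def)
      hence "s \<le> s0" unfolding s0_def using bS by (simp add: cSup_upper)
      thus False using \<open>s > s0\<close> by simp
    qed
  qed
  have s0r: "t1 \<le> s0" "s0 \<le> t2" "f s0 \<le> M" using s0S by (auto simp: S_def)
  have lt: "s0 < t2" using s0r ft2 by (cases "s0 = t2") auto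
  have cont2: "continuous_on {s0..t2} f" by (rule continuous_on_subset[OF cont]) (use s0r in auto)
  have dint: "\<And>z. s0 < z \<Longrightarrow> z < t2 \<Longrightarrow> (f has_real_derivative f' z) (at z)"
  proof -
    fix z assume "s0 < z" "z < t2"
    hence "t1 < z" using s0r by simp
    have "(f has_real_derivative f' z) (at z within {t1..t2})" using der \<open>t1 < z\<close> \<open>z < t2\<close> by simp
    thus "(f has_real_derivative f' z) (at z)" using at_within_Icc_at[OF \<open>t1 < z\<close> \<open>z < t2\<close>] by simp
  qed
  obtain l z where z: "s0 < z" "z < t2" "DERIV f z :> l" "f t2 - f s0 = (t2 - s0) * l"
    using MVT[OF lt cont2] dint real_differentiable_def by blast
  have "l = f' z" using DERIV_unique[OF z(3) dint[OF z(1,2)]] .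
  moreover have "f' z \<le> 0" using neg above z s0r by auto
  ultimately have "f t2 - f s0 \<le> 0" using z(4) lt by (simp add: mult_nonneg_nonpos)
  thus False using s0r ft2 by simp
qed

lemma eventual:
  fixes f f' :: "real \<Rightarrow> real"
  assumes der: "\<And>s. s \<ge> t0 \<Longrightarrow> (f has_real_derivative f' s) (at s within {t0..})"
    and neg: "\<And>s. s \<ge> t0 \<Longrightarrow> f s > M \<Longrightarrow> f' s \<le> - k"
    and k: "k > 0"
  shows "\<exists>T\<ge>t0. \<forall>t\<ge>T. f t \<le> M"
proof -
  define t1 where "t1 = t0 + (\<bar>f t0 - M\<bar> + 1) / k"
  have t01: "t0 \<le> t1" using k by (simp add: t1_def)
  have "\<exists>s\<in>{t0..t1}. f s \<le> M"
  proof (rule ccontr)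
    assume "\<not> ?thesis"
    hence gt: "\<And>s. s \<in> {t0..t1} \<Longrightarrow> f s > M" by (meson not_le)
    have "\<And>s. s \<in> {t0..t1} \<Longrightarrow> (f has_derivative (*) (f' s)) (at s within {t0..t1})"
      using der DERIV_subset[of f _ _ "{t0..}" "{t0..t1}"] by (auto simp: has_field_derivative_def)
    then obtain x where x: "x \<in> {t0..t1}" "f t1 - f t0 = f' x * (t1 - t0)"
      using mvt_very_simple[OF t01, of f "\<lambda>s. (*) (f' s)"] by auto
    have "f' x * (t1 - t0) \<le> - k * (t1 - t0)"
      using neg[of x] gt[OF x(1)] x(1) t01 by (intro mult_right_mono) auto
    also have "\<dots> = - (\<bar>f t0 - M\<bar> + 1)" using k by (simp add: t1_def)
    finally have "f t1 < M" using x(2) by linarith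
    thus False using gt[of t1] t01 by auto
  qed
  then obtain s where s: "s \<in> {t0..t1}" "f s \<le> M" by blast
  have "\<forall>t\<ge>s. f t \<le> M"
  proof (intro allI impI)
    fix t assume "s \<le> t"
    show "f t \<le> M"
    proof (rule invariance[where f=f and f'=f' and M=M, OF \<open>s \<le> t\<close>])
      fix r assume r: "r \<in> {s..t}"
      show "(f has_real_derivative f' r) (at r within {s..t})"
        using der[of r] r s by (auto intro: DERIV_subset)
      show "f r > M \<Longrightarrow> f' r \<le> 0" using neg[of r] r s k by auto
    qed (use s in auto)
  qed
  thus ?thesis using s by auto
qed


lemma field_alpha:
  "net_field \<alpha> (-\<alpha>) (\<alpha>/2) (-\<alpha>/2) w (x1, x2) =
    (\<alpha>/2* (x1+x2) - w*x2^3 + w* (x1+x2)^3, -(\<alpha>/2) * (x1+x2) + w*x2^3)"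
  unfolding net_field_def by (simp add: field_simps)

lemma deriv_UV:
  assumes sol: "is_solution (net_field \<alpha> (-\<alpha>) (\<alpha>/2) (-\<alpha>/2) w) x I" and t: "t \<in> I"
  shows "((\<lambda>t. (fst (x t) + snd (x t))^2) has_real_derivative 2*w* (fst (x t) + snd (x t))^4) (at t within I)"
    and "((\<lambda>t. (snd (x t))^2) has_real_derivative
          2* snd (x t) * (-(\<alpha>/2) * (fst (x t) + snd (x t)) + w* (snd (x t))^3)) (at t within I)"
proof -
  obtain x1 x2 where xt: "x t = (x1, x2)" by fastforce
  have d: "(x has_vector_derivative net_field \<alpha> (-\<alpha>) (\<alpha>/2) (-\<alpha>/2) w (x t)) (at t within I)"
    using sol t by (simp add: is_solution_def)
  note d1 = comp_deriv(1)[OF d] and d2 = comp_deriv(2)[OF d]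
  have "((\<lambda>t. (fst (x t) + snd (x t))^2) has_real_derivative
        of_nat 2 * ((fst (net_field \<alpha> (-\<alpha>) (\<alpha>/2) (-\<alpha>/2) w (x t)) + snd (net_field \<alpha> (-\<alpha>) (\<alpha>/2) (-\<alpha>/2) w (x t))) * (fst (x t) + snd (x t))^(2-Suc 0))) (at t within I)"
    by (rule DERIV_power[OF DERIV_add[OF d1 d2]])
  moreover have "of_nat 2 * ((fst (net_field \<alpha> (-\<alpha>) (\<alpha>/2) (-\<alpha>/2) w (x t)) + snd (net_field \<alpha> (-\<alpha>) (\<alpha>/2) (-\<alpha>/2) w (x t))) * (fst (x t) + snd (x t))^(2-Suc 0))
     = 2*w* (fst (x t) + snd (x t))^4"
    unfolding xt field_alpha by (simp add: algebra_simps power_def numeral_eq_Suc)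
  ultimately show "((\<lambda>t. (fst (x t) + snd (x t))^2) has_real_derivative 2*w* (fst (x t) + snd (x t))^4) (at t within I)" by (simp only:)
  have "((\<lambda>t. (snd (x t))^2) has_real_derivative
        of_nat 2 * (snd (net_field \<alpha> (-\<alpha>) (\<alpha>/2) (-\<alpha>/2) w (x t)) * (snd (x t))^(2-Suc 0))) (at t within I)"
    by (rule DERIV_power[OF d2])
  moreover have "of_nat 2 * (snd (net_field \<alpha> (-\<alpha>) (\<alpha>/2) (-\<alpha>/2) w (x t)) * (snd (x t))^(2-Suc 0))
     = 2* snd (x t) * (-(\<alpha>/2) * (fst (x t) + snd (x t)) + w* (snd (x t))^3)"
    unfolding xt field_alpha by simp
  ultimately show "((\<lambda>t. (snd (x t))^2) has_real_derivative
          2* snd (x t) * (-(\<alpha>/2) * (fst (x t) + snd (x t)) + w* (snd (x t))^3)) (at t within I)" by (simp only:)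
qed

lemma key_ineq:
  fixes \<alpha> w m u v :: real
  assumes "w < 0" "\<alpha> > 0" "m > 0" "\<bar>u\<bar> \<le> (-w) * m^3 / \<alpha>" "\<bar>v\<bar> \<ge> m"
  shows "2 * v * (-(\<alpha>/2) * u + w * v^3) \<le> - ((-w) * m^4)"
proof -
  have e: "2 * v * (-(\<alpha>/2) * u + w * v^3) = - (\<alpha> * u * v) - 2 * (-w) * \<bar>v\<bar>^4"
    by (simp add: algebra_simps power_def numeral_eq_Suc)
  have "- (\<alpha> * u * v) \<le> \<alpha> * \<bar>u\<bar> * \<bar>v\<bar>" using assms(2)
    by (metis abs_ge_minus_self abs_mult abs_of_pos mult.assoc)
  also have "\<dots> \<le> \<alpha> * ((-w) * m^3 / \<alpha>) * \<bar>v\<bar>"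
    using assms by (intro mult_right_mono mult_left_mono) auto
  also have "\<dots> = (-w) * m^3 * \<bar>v\<bar>" using assms(2) by simp
  also have "\<dots> \<le> (-w) * \<bar>v\<bar>^3 * \<bar>v\<bar>"
    using assms by (intro mult_right_mono mult_left_mono power_mono) auto
  also have "\<dots> = (-w) * \<bar>v\<bar>^4" by (simp add: power_def numeral_eq_Suc)
  finally have "2 * v * (-(\<alpha>/2) * u + w * v^3) \<le> - ((-w) * \<bar>v\<bar>^4)" using e by linarith
  moreover have "(-w) * m^4 \<le> (-w) * \<bar>v\<bar>^4"
    using assms by (intro mult_left_mono power_mono) auto
  ultimately show ?thesis by linarith
qed


lemma pair_norm_le: "norm (p :: real \<times> real) \<le> \<bar>fst p\<bar> + \<bar>snd p\<bar>"
  by (cases p) (simp add: norm_Pair sqrt_sum_squares_le_sum_abs)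

lemma fst_le: "\<bar>fst (p :: real \<times> real)\<bar> \<le> norm p"
  by (metis norm_fst_le prod.collapse real_norm_def)
lemma snd_le: "\<bar>snd (p :: real \<times> real)\<bar> \<le> norm p"
  by (metis norm_snd_le prod.collapse real_norm_def)

lemma sq_le_abs: "(a::real)^2 \<le> b^2 \<Longrightarrow> \<bar>a\<bar> \<le> \<bar>b\<bar>"
  using abs_le_square_iff by blast

lemma stab:
  assumes a: "\<alpha> > 0" and w: "w < 0"
  shows "lyap_stable_origin (net_field \<alpha> (-\<alpha>) (\<alpha>/2) (-\<alpha>/2) w)"
  unfolding lyap_stable_origin_def
proof (intro allI impI)
  fix \<epsilon> :: real assume e: "\<epsilon> > 0"
  define m where "m = \<epsilon>/4"
  define d' where "d' = (-w) * m^3 / \<alpha>"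
  define \<delta> where "\<delta> = min (\<epsilon>/8) (d'/2)"
  have m0: "m > 0" using e by (simp add: m_def)
  have d'0: "d' > 0" using m0 a w by (simp add: d'_def divide_less_0_iff mult_neg_pos)
  have d0: "\<delta> > 0" using e d'0 by (simp add: \<delta>_def)
  show "\<exists>\<delta>>0. \<forall>x T. 0 < T \<and> is_solution (net_field \<alpha> (-\<alpha>) (\<alpha>/2) (-\<alpha>/2) w) x {0..<T} \<and> norm (x 0) < \<delta>
        \<longrightarrow> (\<forall>t\<in>{0..<T}. norm (x t) < \<epsilon>)"
  proof (intro exI[of _ \<delta>] conjI d0 allI impI ballI)
    fix x T t
    assume H: "0 < T \<and> is_solution (net_field \<alpha> (-\<alpha>) (\<alpha>/2) (-\<alpha>/2) w) x {0..<T} \<and> norm (x 0) < \<delta>"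
      and t: "t \<in> {0..<T}"
    hence sol: "is_solution (net_field \<alpha> (-\<alpha>) (\<alpha>/2) (-\<alpha>/2) w) x {0..<T}" and n0: "norm (x 0) < \<delta>" by auto
    define u where "u s = fst (x s) + snd (x s)" for s
    define v where "v s = snd (x s)" for s
    have u0: "\<bar>u 0\<bar> < 2*\<delta>" using fst_le[of "x 0"] snd_le[of "x 0"] n0 unfolding u_def by linarith
    have v0: "\<bar>v 0\<bar> < \<delta>" using snd_le[of "x 0"] n0 unfolding v_def by linarith
    have dU: "\<And>r s. s \<in> {0..<T} \<Longrightarrow> r \<in> {0..s} \<Longrightarrow>
        ((\<lambda>t. (u t)^2) has_real_derivative 2*w*(u r)^4) (at r within {0..s})"
    proof -
      fix r s assume s: "s \<in> {0..<T}" and r: "r \<in> {0..s}"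
      hence "r \<in> {0..<T}" by auto
      from deriv_UV(1)[OF sol this]
      show "((\<lambda>t. (u t)^2) has_real_derivative 2*w*(u r)^4) (at r within {0..s})"
        unfolding u_def by (rule DERIV_subset) (use s in auto)
    qed
    have dV: "\<And>r s. s \<in> {0..<T} \<Longrightarrow> r \<in> {0..s} \<Longrightarrow>
        ((\<lambda>t. (v t)^2) has_real_derivative 2 * v r * (-(\<alpha>/2) * u r + w * (v r)^3)) (at r within {0..s})"
    proof -
      fix r s assume s: "s \<in> {0..<T}" and r: "r \<in> {0..s}"
      hence "r \<in> {0..<T}" by auto
      from deriv_UV(2)[OF sol this]
      show "((\<lambda>t. (v t)^2) has_real_derivative 2 * v r * (-(\<alpha>/2) * u r + w * (v r)^3)) (at r within {0..s})"
        unfolding u_def v_def by (rule DERIV_subset) (use s in auto)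
    qed
    have Ub: "\<And>s. s \<in> {0..<T} \<Longrightarrow> \<bar>u s\<bar> \<le> \<bar>u 0\<bar>"
    proof -
      fix s assume s: "s \<in> {0..<T}"
      have "(u s)^2 \<le> (u 0)^2"
      proof (rule invariance[where f="\<lambda>t. (u t)^2" and f'="\<lambda>r. 2*w*(u r)^4"])
        show "0 \<le> s" using s by simp
        show "\<And>r. r \<in> {0..s} \<Longrightarrow> ((\<lambda>t. (u t)^2) has_real_derivative 2*w*(u r)^4) (at r within {0..s})"
          using dU s by blast
        show "\<And>r. r \<in> {0..s} \<Longrightarrow> (u r)^2 > (u 0)^2 \<Longrightarrow> 2*w*(u r)^4 \<le> 0"
          using w by (simp add: mult_nonpos_nonneg)
      qed simp
      thus "\<bar>u s\<bar> \<le> \<bar>u 0\<bar>" by (rule sq_le_abs)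
    qed
    have "(v t)^2 \<le> (max \<bar>v 0\<bar> m)^2"
    proof (rule invariance[where f="\<lambda>t. (v t)^2" and f'="\<lambda>r. 2 * v r * (-(\<alpha>/2) * u r + w * (v r)^3)"])
      show "0 \<le> t" using t by simp
      show "\<And>r. r \<in> {0..t} \<Longrightarrow> ((\<lambda>t. (v t)^2) has_real_derivative 2 * v r * (-(\<alpha>/2) * u r + w * (v r)^3)) (at r within {0..t})"
        using dV t by blast
      show "(v 0)^2 \<le> (max \<bar>v 0\<bar> m)^2"
        by (metis power2_abs power_mono abs_ge_zero max.cobounded1)
      fix r assume r: "r \<in> {0..t}" and gt: "(v r)^2 > (max \<bar>v 0\<bar> m)^2"
      have "\<bar>v r\<bar> \<ge> m"
      proof -
        have "m^2 \<le> (max \<bar>v 0\<bar> m)^2" using m0 by (intro power_mono) auto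
        hence "m^2 \<le> (v r)^2" using gt by linarith
        thus ?thesis using sq_le_abs m0 by fastforce
      qed
      moreover have "\<bar>u r\<bar> \<le> (-w) * m^3 / \<alpha>"
        using Ub[of r] r t u0 unfolding d'_def[symmetric] \<delta>_def by auto
      ultimately have "2 * v r * (-(\<alpha>/2) * u r + w * (v r)^3) \<le> - ((-w) * m^4)"
        using key_ineq[OF w a m0] by blast
      also have "\<dots> \<le> 0" using w m0 by (simp add: mult_nonpos_nonneg)
      finally show "2 * v r * (-(\<alpha>/2) * u r + w * (v r)^3) \<le> 0" .
    qed
    hence vt: "\<bar>v t\<bar> \<le> max \<bar>v 0\<bar> m" using sq_le_abs by fastforce
    have ut: "\<bar>u t\<bar> < \<epsilon>/4" using Ub[OF t] u0 unfolding \<delta>_def by auto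
    have vt': "\<bar>v t\<bar> \<le> \<epsilon>/4" using vt v0 e unfolding m_def \<delta>_def by auto
    have "norm (x t) \<le> \<bar>fst (x t)\<bar> + \<bar>snd (x t)\<bar>" by (rule pair_norm_le)
    also have "\<dots> \<le> \<bar>u t\<bar> + 2 * \<bar>v t\<bar>" unfolding u_def v_def by linarith
    finally show "norm (x t) < \<epsilon>" using ut vt' by linarith
  qed
qed


lemma attr:
  assumes a: "\<alpha> > 0" and w: "w < 0"
    and sol: "is_solution (net_field \<alpha> (-\<alpha>) (\<alpha>/2) (-\<alpha>/2) w) x {0..}"
  shows "(x \<longlongrightarrow> 0) at_top"
proof -
  define u where "u s = fst (x s) + snd (x s)" for s
  define v where "v s = snd (x s)" for s
  have dU: "\<And>r t0. t0 \<ge> 0 \<Longrightarrow> r \<ge> t0 \<Longrightarrow>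
      ((\<lambda>t. (u t)^2) has_real_derivative 2*w*(u r)^4) (at r within {t0..})"
  proof -
    fix r t0 :: real assume s: "t0 \<ge> 0" and r: "r \<ge> t0"
    hence "r \<in> {0..}" by auto
    from deriv_UV(1)[OF sol this]
    show "((\<lambda>t. (u t)^2) has_real_derivative 2*w*(u r)^4) (at r within {t0..})"
      unfolding u_def by (rule DERIV_subset) (use s in auto)
  qed
  have dV: "\<And>r t0. t0 \<ge> 0 \<Longrightarrow> r \<ge> t0 \<Longrightarrow>
      ((\<lambda>t. (v t)^2) has_real_derivative 2 * v r * (-(\<alpha>/2) * u r + w * (v r)^3)) (at r within {t0..})"
  proof -
    fix r t0 :: real assume s: "t0 \<ge> 0" and r: "r \<ge> t0"
    hence "r \<in> {0..}" by auto
    from deriv_UV(2)[OF sol this]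
    show "((\<lambda>t. (v t)^2) has_real_derivative 2 * v r * (-(\<alpha>/2) * u r + w * (v r)^3)) (at r within {t0..})"
      unfolding u_def v_def by (rule DERIV_subset) (use s in auto)
  qed
  have evU: "\<exists>T\<ge>0. \<forall>t\<ge>T. (u t)^2 \<le> M" if M: "M > 0" for M
  proof (rule eventual[where f="\<lambda>t. (u t)^2" and f'="\<lambda>r. 2*w*(u r)^4" and k="-2*w*M^2"])
    show "\<And>s. 0 \<le> s \<Longrightarrow> ((\<lambda>t. (u t)^2) has_real_derivative 2*w*(u s)^4) (at s within {0..})"
      using dU by simp
    show "0 < -2*w*M^2" using w M by (simp add: mult_neg_pos)
    fix s assume "0 \<le> s" and gt: "(u s)^2 > M"
    have "M^2 \<le> ((u s)^2)^2" using gt M by (intro power_mono) auto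
    hence "M^2 \<le> (u s)^4" by (simp add: power_mult[symmetric])
    hence "w * (u s)^4 \<le> w * M^2" using w by (intro mult_left_mono_neg) auto
    thus "2*w*(u s)^4 \<le> - (-2*w*M^2)" by simp
  qed
  have evV: "\<exists>T\<ge>0. \<forall>t\<ge>T. (v t)^2 \<le> m^2" if m0: "m > 0" for m
  proof -
    define d' where "d' = (-w) * m^3 / \<alpha>"
    have d'0: "d' > 0" using m0 a w by (simp add: d'_def divide_less_0_iff mult_neg_pos)
    obtain T1 where T1: "T1 \<ge> 0" "\<And>t. t \<ge> T1 \<Longrightarrow> (u t)^2 \<le> d'^2"
      using evU[of "d'^2"] d'0 by auto
    have "\<exists>T\<ge>T1. \<forall>t\<ge>T. (v t)^2 \<le> m^2"
    proof (rule eventual[where f="\<lambda>t. (v t)^2" and f'="\<lambda>r. 2 * v r * (-(\<alpha>/2) * u r + w * (v r)^3)" and k="(-w)*m^4"])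
      show "\<And>s. T1 \<le> s \<Longrightarrow> ((\<lambda>t. (v t)^2) has_real_derivative 2 * v s * (-(\<alpha>/2) * u s + w * (v s)^3)) (at s within {T1..})"
        using dV T1(1) by simp
      show "0 < (-w)*m^4" using w m0 by (simp add: mult_neg_pos)
      fix s assume s: "T1 \<le> s" and gt: "(v s)^2 > m^2"
      have "\<bar>v s\<bar> \<ge> m" using sq_le_abs[of m "v s"] gt m0 by simp
      moreover have "\<bar>u s\<bar> \<le> (-w) * m^3 / \<alpha>"
        using sq_le_abs[OF T1(2)[OF s]] d'0 unfolding d'_def[symmetric] by simp
      ultimately show "2 * v s * (-(\<alpha>/2) * u s + w * (v s)^3) \<le> - ((-w) * m^4)"
        using key_ineq[OF w a m0] by blast
    qed
    thus ?thesis using T1(1) by (meson order_trans)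
  qed
  have "\<forall>e>0. eventually (\<lambda>t. dist (x t) 0 < e) at_top"
  proof (intro allI impI)
    fix e :: real assume e: "e > 0"
    obtain T1 where T1: "\<And>t. t \<ge> T1 \<Longrightarrow> (u t)^2 \<le> (e/4)^2" using evU[of "(e/4)^2"] e by auto
    obtain T2 where T2: "\<And>t. t \<ge> T2 \<Longrightarrow> (v t)^2 \<le> (e/4)^2" using evV[of "e/4"] e by auto
    show "eventually (\<lambda>t. dist (x t) 0 < e) at_top"
      unfolding eventually_at_top_linorder
    proof (intro exI[of _ "max T1 T2"] allI impI)
      fix t assume "t \<ge> max T1 T2"
      hence ut: "\<bar>u t\<bar> \<le> e/4" and vt: "\<bar>v t\<bar> \<le> e/4"
        using sq_le_abs[OF T1[of t]] sq_le_abs[OF T2[of t]] e by auto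
      have "norm (x t) \<le> \<bar>fst (x t)\<bar> + \<bar>snd (x t)\<bar>" by (rule pair_norm_le)
      also have "\<dots> \<le> \<bar>u t\<bar> + 2 * \<bar>v t\<bar>" unfolding u_def v_def by linarith
      finally show "dist (x t) 0 < e" using ut vt e by simp
    qed
  qed
  thus ?thesis by (simp add: tendsto_iff)
qed



lemma A2zero:
  fixes a1 a2 w12 w21 p1 p2 :: real
  assumes h3: "a1 - w12 + a2 - w21 = 0" and h4: "a1 * a2 - a1 * w21 - a2 * w12 = 0"
  shows "(a1 - w12) * ((a1 - w12) * p1 + w12 * p2) + w12 * (w21 * p1 + (a2 - w21) * p2) = 0"
    "w21 * ((a1 - w12) * p1 + w12 * p2) + (a2 - w21) * (w21 * p1 + (a2 - w21) * p2) = 0"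
proof -
  have "(a1 - w12) * ((a1 - w12) * p1 + w12 * p2) + w12 * (w21 * p1 + (a2 - w21) * p2)
     = p1 * ((a1 - w12) * (a1 - w12 + a2 - w21) - (a1 * a2 - a1 * w21 - a2 * w12)) + p2 * w12 * (a1 - w12 + a2 - w21)"
    by (simp add: algebra_simps)
  thus "(a1 - w12) * ((a1 - w12) * p1 + w12 * p2) + w12 * (w21 * p1 + (a2 - w21) * p2) = 0"
    using h3 h4 by simp
  have "w21 * ((a1 - w12) * p1 + w12 * p2) + (a2 - w21) * (w21 * p1 + (a2 - w21) * p2)
     = p1 * w21 * (a1 - w12 + a2 - w21) + p2 * ((a2 - w21) * (a1 - w12 + a2 - w21) - (a1 * a2 - a1 * w21 - a2 * w12))"
    by (simp add: algebra_simps)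
  thus "w21 * ((a1 - w12) * p1 + w12 * p2) + (a2 - w21) * (w21 * p1 + (a2 - w21) * p2) = 0"
    using h3 h4 by simp
qed

lemma unstab:
  fixes a1 a2 w12 w21 :: real
  assumes a1: "a1 \<noteq> 0"
    and h3: "a1 - w12 + a2 - w21 = 0"
    and h4: "a1 * a2 - a1 * w21 - a2 * w12 = 0"
  shows "unstable_origin (net_field a1 a2 w12 w21 0)"
proof -
  define lin where "lin p = ((a1 - w12) * fst p + w12 * snd p, w21 * fst p + (a2 - w21) * snd p)" for p :: "real \<times> real"
  have F0: "net_field a1 a2 w12 w21 0 p = lin p" for p
    by (cases p) (simp add: net_field_def lin_def algebra_simps)
  have L2: "lin (lin p) = 0" for p
    using A2zero[OF h3 h4, of "fst p" "snd p"] by (simp add: lin_def zero_prod_def)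
  have Llin: "lin (p + t *\<^sub>R q) = lin p + t *\<^sub>R lin q" for p q t
    by (simp add: lin_def algebra_simps)
  obtain e where e1: "norm e = 1" and ne: "lin e \<noteq> 0"
  proof (cases "lin (1, 0) = 0")
    case True
    hence "a1 - w12 = 0" "w21 = 0" by (auto simp: lin_def zero_prod_def)
    hence "lin (0, 1) \<noteq> 0" using a1 by (auto simp: lin_def zero_prod_def)
    thus ?thesis using that[of "(0,1)"] by (simp add: norm_Pair)
  next
    case False
    thus ?thesis using that[of "(1,0)"] by (simp add: norm_Pair)
  qed
  show ?thesis
    unfolding unstable_origin_def lyap_stable_origin_def
  proof
    assume st: "\<forall>\<epsilon>>0. \<exists>\<delta>>0. \<forall>x T. 0 < T \<and> is_solution (net_field a1 a2 w12 w21 0) x {0..<T} \<and> norm (x 0) < \<delta>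
        \<longrightarrow> (\<forall>t\<in>{0..<T}. norm (x t) < \<epsilon>)"
    then obtain \<delta> where d: "\<delta> > 0" and H: "\<And>x T. 0 < T \<and> is_solution (net_field a1 a2 w12 w21 0) x {0..<T} \<and> norm (x 0) < \<delta>
        \<Longrightarrow> (\<forall>t\<in>{0..<T}. norm (x t) < 1)"
      by (meson zero_less_one)
    define s where "s = \<delta>/2"
    define p where "p = s *\<^sub>R e"
    define q where "q = lin p"
    have s0: "s > 0" using d by (simp add: s_def)
    have np: "norm p = s" using s0 e1 by (simp add: p_def)
    have qp: "q = s *\<^sub>R lin e" unfolding q_def p_def using Llin[of 0 s e] by (simp add: lin_def)
    have nq: "norm q > 0" using qp s0 ne by simp
    define x where "x t = p + t *\<^sub>R q" for t
    define t0 where "t0 = (1 + s) / norm q"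
    have t00: "t0 > 0" using s0 nq by (simp add: t0_def)
    define T where "T = t0 + 1"
    have sol: "is_solution (net_field a1 a2 w12 w21 0) x {0..<T}"
      unfolding is_solution_def
    proof
      fix t assume "t \<in> {0..<T}"
      have "net_field a1 a2 w12 w21 0 (x t) = q"
        unfolding F0 x_def Llin q_def L2 by simp
      moreover have "(x has_vector_derivative q) (at t within {0..<T})"
        unfolding x_def has_vector_derivative_def
        by (auto intro!: derivative_eq_intros)
      ultimately show "(x has_vector_derivative net_field a1 a2 w12 w21 0 (x t)) (at t within {0..<T})"
        by simp
    qed
    have "x 0 = p" by (simp add: x_def)
    hence "\<forall>t\<in>{0..<T}. norm (x t) < 1" using H[of T x] sol t00 np d
      by (simp add: T_def s_def)
    hence lt: "norm (x t0) < 1" using t00 by (simp add: T_def)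
    have "norm (t0 *\<^sub>R q) = 1 + s" using nq t00 s0 by (simp add: t0_def)
    moreover have "norm (t0 *\<^sub>R q) \<le> norm (x t0) + norm p"
      using norm_triangle_ineq4[of "x t0" p] by (simp add: x_def)
    ultimately show False using lt np by linarith
  qed
qed



theorem proposition1:
  fixes a1 a2 w12 w21 w :: real
  assumes "a1 \<noteq> 0" and "a2 \<noteq> 0"
    and "a1 - w12 + a2 - w21 = 0"
    and "a1 * a2 - a1 * w21 - a2 * w12 = 0"
  shows "(w = 0 \<longrightarrow> unstable_origin (net_field a1 a2 w12 w21 w))
       \<and> (\<forall>\<alpha>::real. a1 = \<alpha> \<and> a2 = - \<alpha> \<and> \<alpha> > 0 \<and> w < 0
            \<longrightarrow> loc_asymp_stable_origin (net_field a1 a2 w12 w21 w))"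
proof (intro conjI allI impI)
  assume "w = 0"
  thus "unstable_origin (net_field a1 a2 w12 w21 w)"
    using unstab[OF assms(1,3,4)] by simp
next
  fix \<alpha> :: real
  assume H: "a1 = \<alpha> \<and> a2 = - \<alpha> \<and> \<alpha> > 0 \<and> w < 0"
  hence a: "\<alpha> > 0" and w: "w < 0" by auto
  have w21: "w21 = - w12" using assms(3) H by simp
  have "\<alpha> * (2 * w12 - \<alpha>) = 0" using assms(4) H w21 by (simp add: algebra_simps)
  hence w12: "w12 = \<alpha>/2" using a by simp
  have F: "net_field a1 a2 w12 w21 w = net_field \<alpha> (-\<alpha>) (\<alpha>/2) (-\<alpha>/2) w"
    using H w21 w12 by (simp only: minus_divide_left)
  show "loc_asymp_stable_origin (net_field a1 a2 w12 w21 w)"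
    unfolding F loc_asymp_stable_origin_def
    using stab[OF a w] attr[OF a w] by (intro conjI exI[of _ 1]) auto
qed

end
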